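(* Let $G$ be a bounded measurable function on $[0,a^*]$ with $G\ge4\pi$ a.e., $\beta>0$, $P(a)=aG(a)$, and let $f_1>0$ be an eigenfunction associated with $\kappa=\kappa_1(G,\beta)$. Let $X:=f_1$ and let $Y$ be the absolutely continuous representative of the quasi-derivative $Pf_1'$. If $\kappa<\beta$, then \[|Y(a)|^2-\beta^2a^2|X(a)|^2<0\quad\text{for all }a\in\,]0,a^*[.\]
   Context: $\kappa_1(G,\beta)$ is the lowest eigenvalue of the weak Sturm–Liouville problem $-(Pf')'+\beta^2Qf=\kappa f$ on $]0,a^*[$, $\lim_{a\to0}Pf'=0$, $P(a^* )f'(a^* )=0$, with $P(a)=aG(a)$, $Q(a)=a/G(a)$ (weak sense: $f\in\mathcal F_{4\pi}$, $\int(Pf'\overline{\varphi'}+\beta^2Qf\overline\varphi)=\kappa\int f\overline\varphi$ for all $\varphi\in\mathcal F_{4\pi}$, where $\mathcal F_{4\pi}$ is the set of $f\in L^2(]0,a^*[)$ with $\int_0^{a^*}a|f'|^2<\infty$); equivalently the minimum of $\int(P|f'|^2+\beta^2Q|f|^2)/\int|f|^2$ over $\mathcal F_{4\pi}\setminus\{0\}$. The eigenfunction $f_1$ is locally absolutely continuous on $]0,a^*]$ and $Pf_1'$ is absolutely continuous on $[0,a^*]$. *)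

theory Defs
  imports "HOL-Analysis.Analysis"
begin

definition abs_cont_on :: "real set \<Rightarrow> (real \<Rightarrow> real) \<Rightarrow> bool" where
  "abs_cont_on S f \<longleftrightarrow>
     (\<forall>e>0. \<exists>d>0. \<forall>(n::nat) (l::nat \<Rightarrow> real) (r::nat \<Rightarrow> real).
        (\<forall>i<n. l i \<le> r i \<and> {l i..r i} \<subseteq> S) \<and>
        (\<forall>i<n. \<forall>j<n. i \<noteq> j \<longrightarrow> r i \<le> l j \<or> r j \<le> l i) \<and>
        (\<Sum>i<n. r i - l i) < d
        \<longrightarrow> (\<Sum>i<n. \<bar>f (r i) - f (l i)\<bar>) < e)"

definition has_weak_deriv :: "real \<Rightarrow> (real \<Rightarrow> complex) \<Rightarrow> (real \<Rightarrow> complex) \<Rightarrow> bool" where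
  "has_weak_deriv as f f' \<longleftrightarrow>
     (\<exists>g. (AE x in lebesgue. x \<in> {0<..<as} \<longrightarrow> f x = g x) \<and>
          (\<forall>x\<in>{0<..<as}. \<forall>y\<in>{0<..<as}. x \<le> y \<longrightarrow>
              set_integrable lebesgue {x..y} f' \<and>
              g y - g x = (LINT t:{x..y}|lebesgue. f' t)))"

definition inF :: "real \<Rightarrow> (real \<Rightarrow> complex) \<Rightarrow> (real \<Rightarrow> complex) \<Rightarrow> bool" where
  "inF as f f' \<longleftrightarrow> has_weak_deriv as f f' \<and>
     set_integrable lebesgue {0<..<as} (\<lambda>x. (cmod (f x))\<^sup>2) \<and>
     set_integrable lebesgue {0<..<as} (\<lambda>x. x * (cmod (f' x))\<^sup>2)"

definition Pfun :: "(real \<Rightarrow> real) \<Rightarrow> real \<Rightarrow> real" where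
  "Pfun G a = a * G a"

definition Qfun :: "(real \<Rightarrow> real) \<Rightarrow> real \<Rightarrow> real" where
  "Qfun G a = a / G a"

text \<open>(f, f') is a weak eigenfunction (f nonzero in L^2) with eigenvalue kappa of
  -(P f')' + beta^2 Q f = kappa f on ]0,as[.\<close>
definition weak_eigen ::
  "(real \<Rightarrow> real) \<Rightarrow> real \<Rightarrow> real \<Rightarrow> real \<Rightarrow> (real \<Rightarrow> complex) \<Rightarrow> (real \<Rightarrow> complex) \<Rightarrow> bool" where
  "weak_eigen G \<beta> as \<kappa> f f' \<longleftrightarrow>
     inF as f f' \<and>
     (LINT x:{0<..<as}|lebesgue. (cmod (f x))\<^sup>2) > 0 \<and>
     (\<forall>\<phi> \<phi>'. inF as \<phi> \<phi>' \<longrightarrow>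
        (LINT x:{0<..<as}|lebesgue.
            complex_of_real (Pfun G x) * f' x * cnj (\<phi>' x)
          + complex_of_real (\<beta>\<^sup>2 * Qfun G x) * f x * cnj (\<phi> x))
        = complex_of_real \<kappa> * (LINT x:{0<..<as}|lebesgue. f x * cnj (\<phi> x)))"

definition kappa1 :: "(real \<Rightarrow> real) \<Rightarrow> real \<Rightarrow> real \<Rightarrow> real" where
  "kappa1 G \<beta> as = Inf {\<kappa>. \<exists>f f'. weak_eigen G \<beta> as \<kappa> f f'}"

end

theory Submission imports Defs begin
lemma P1: "0 < (v::real) \<Longrightarrow> v powr (-p-1) = v powr (-p) / v"
  by (simp add: powr_diff powr_minus divide_inverse) 
lemma P2: "0 < (v::real) \<Longrightarrow> v \<le> a0 \<Longrightarrow> 0 \<le> p \<Longrightarrow> 1 \<le> a0 powr p * v powr (-p)"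
proof -
  assume a: "0 < v" "v \<le> a0" "0 \<le> p"
  have "(a0 / v) powr p = a0 powr p / v powr p" by (rule powr_divide)
  then have "a0 powr p * v powr (-p) = (a0 / v) powr p" by (simp add: powr_minus divide_inverse)
  moreover have "1 \<le> (a0 / v) powr p" using a by (intro ge_one_powr_ge_zero) auto
  ultimately show ?thesis by simp
qed
lemma P3: "0 < u \<Longrightarrow> u \<le> b \<Longrightarrow> 0 < p \<Longrightarrow> ((\<lambda>v::real. v powr (-p-1)) has_integral ((u powr (-p) - b powr (-p)) / p)) {u..b}"
proof -
  assume a: "0 < u" "u \<le> b" "0 < p"
  have "((\<lambda>v::real. v powr (-p-1)) has_integral ((\<lambda>v. - (v powr (-p)) / p) b - (\<lambda>v. - (v powr (-p)) / p) u)) {u..b}"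
  proof (rule fundamental_theorem_of_calculus[OF a(2)])
    fix x assume x: "x \<in> {u..b}"
    then have "x > 0" using a by auto
    have "((\<lambda>v. - (v powr (-p)) / p) has_real_derivative (- ((-p) * x powr (-p - 1)) / p)) (at x)"
      by (intro DERIV_cdivide DERIV_minus has_real_derivative_powr \<open>x > 0\<close>)
    moreover have "- ((-p) * x powr (-p - 1)) / p = x powr (-p-1)" using a by simp
    ultimately show "((\<lambda>v. - (v powr (-p)) / p) has_vector_derivative x powr (-p-1)) (at x within {u..b})"
      by (simp add: has_real_derivative_iff_has_vector_derivative has_vector_derivative_at_within)
  qed
  then show ?thesis by (simp add: field_simps diff_divide_distrib)
qed
lemma P4: "0 < (t::real) \<Longrightarrow> t powr (1-p) / t = t powr (-p)"
  by (simp add: powr_diff powr_minus divide_inverse)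

locale S14 =
  fixes G :: "real \<Rightarrow> real" and \<beta> as K :: real and f1 f1' Y :: "real \<Rightarrow> real"
  assumes as_pos: "as > 0"
    and G_meas: "set_borel_measurable lebesgue {0..as} G"
    and G_bdd: "bounded (G ` {0..as})"
    and G_ge: "AE a in lebesgue. a \<in> {0..as} \<longrightarrow> G a \<ge> 4 * pi"
    and beta_pos: "\<beta> > 0"
    and eigen: "weak_eigen G \<beta> as K
                  (\<lambda>a. complex_of_real (f1 a)) (\<lambda>a. complex_of_real (f1' a))"
    and f1_pos: "\<forall>a\<in>{0<..<as}. f1 a > 0"
    and f1_locAC: "\<forall>x\<in>{0<..as}. \<forall>y\<in>{0<..as}. x \<le> y \<longrightarrow>
                     set_integrable lebesgue {x..y} f1' \<and>
                     f1 y - f1 x = (LINT t:{x..y}|lebesgue. f1' t)"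
    and Y_ac: "abs_cont_on {0..as} Y"
    and Y_rep: "AE a in lebesgue. a \<in> {0<..<as} \<longrightarrow> Y a = Pfun G a * f1' a"
    and small: "K < \<beta>"
begin

definition Gm where "Gm t = max (4*pi) (G t)"

lemma good_set: obtains N where "negligible N"
  "\<And>t. t \<in> {0<..<as} \<Longrightarrow> t \<notin> N \<Longrightarrow> G t \<ge> 4*pi \<and> Y t = t * G t * f1' t"
proof -
  have "AE a in lebesgue. a \<in> {0<..<as} \<longrightarrow> G a \<ge> 4*pi \<and> Y a = t"
    if "False" for t using that by auto
  have "AE a in lebesgue. a \<in> {0<..<as} \<longrightarrow> (G a \<ge> 4*pi \<and> Y a = a * G a * f1' a)"
    using G_ge Y_rep by eventually_elim (auto simp: Pfun_def)
  then obtain N where N: "{x \<in> space lebesgue. \<not> (x \<in> {0<..<as} \<longrightarrow> (G x \<ge> 4*pi \<and> Y x = x * G x * f1' x))} \<subseteq> N"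
     "emeasure lebesgue N = 0" "N \<in> sets lebesgue"
    by (rule AE_E)
  have "negligible N" using N(2,3) by (simp add: negligible_iff_null_sets null_sets_def)
  then show ?thesis using N(1) that by auto
qed

lemma f1_int: "set_integrable lebesgue {x..y} f1' \<and> f1 y - f1 x = integral {x..y} f1'"
  if "0 < x" "x \<le> y" "y \<le> as" for x y
proof -
  have "set_integrable lebesgue {x..y} f1' \<and> f1 y - f1 x = (LINT t:{x..y}|lebesgue. f1' t)"
    using f1_locAC that by auto
  then show ?thesis using set_lebesgue_integral_eq_integral(2) by metis
qed

lemma X_cont_on: "continuous_on {x..as} f1" if "x > 0" "x \<le> as" for x
proof -
  have "set_integrable lebesgue {x..as} f1'" using f1_int[of x as] that by simp
  then have int: "f1' integrable_on {x..as}"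
    by (rule set_lebesgue_integral_eq_integral(1))
  have eq: "f1 t = f1 x + integral {x..t} f1'" if "t \<in> {x..as}" for t
  proof -
    have "f1 t - f1 x = integral {x..t} f1'" using f1_int[of x t] that \<open>x > 0\<close> by simp
    then show ?thesis by simp
  qed
  have "continuous_on {x..as} (\<lambda>t. f1 x + integral {x..t} f1')"
    by (rule continuous_on_add[OF continuous_on_const indefinite_integral_continuous_1[OF int]])
  then show ?thesis by (rule continuous_on_eq) (rule eq[symmetric])
qed

lemma X_isCont: "isCont f1 t" if "t \<in> {0<..<as}" for t
proof -
  have "continuous_on {t/2..as} f1" using X_cont_on[of "t/2"] that by auto
  moreover have "t \<in> interior {t/2..as}" using that by auto
  ultimately show ?thesis using continuous_on_interior by blast
qed

lemma Y_cont: "continuous_on {0..as} Y"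
  unfolding continuous_on_iff
proof (intro ballI allI impI)
  fix x e assume x: "x \<in> {0..as}" and e: "(0::real) < e"
  obtain d where d: "d > 0" and H: "\<forall>(n::nat) (l::nat \<Rightarrow> real) (r::nat \<Rightarrow> real).
        (\<forall>i<n. l i \<le> r i \<and> {l i..r i} \<subseteq> {0..as}) \<and>
        (\<forall>i<n. \<forall>j<n. i \<noteq> j \<longrightarrow> r i \<le> l j \<or> r j \<le> l i) \<and>
        (\<Sum>i<n. r i - l i) < d
        \<longrightarrow> (\<Sum>i<n. \<bar>Y (r i) - Y (l i)\<bar>) < e"
    using Y_ac e unfolding abs_cont_on_def by blast
  show "\<exists>d>0. \<forall>x'\<in>{0..as}. dist x' x < d \<longrightarrow> dist (Y x') (Y x) < e"
  proof (intro exI[of _ d] conjI ballI impI d)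
    fix y assume y: "y \<in> {0..as}" "dist y x < d"
    have P1: "(\<forall>i<(1::nat). min x y \<le> max x y \<and> {min x y..max x y} \<subseteq> {0..as})"
      using x y(1) by auto
    have P2: "(\<forall>i<(1::nat). \<forall>j<(1::nat). i \<noteq> j \<longrightarrow> max x y \<le> min x y \<or> max x y \<le> min x y)"
      by auto
    have P3: "(\<Sum>i<(1::nat). max x y - min x y) < d"
      using y(2) by (simp add: dist_real_def abs_real_def max_def min_def split: if_splits)
    have "(\<Sum>i<(1::nat). \<bar>Y (max x y) - Y (min x y)\<bar>) < e"
      using H[rule_format, of 1 "\<lambda>_. min x y" "\<lambda>_. max x y"] P1 P2 P3 by blast
    then have "\<bar>Y (max x y) - Y (min x y)\<bar> < e" by simp
    then show "dist (Y y) (Y x) < e"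
      by (cases "x \<le> y") (auto simp: dist_real_def abs_minus_commute max_def min_def)
  qed
qed

lemma Y_bound: obtains MY where "MY > 0" "\<And>t. t \<in> {0..as} \<Longrightarrow> \<bar>Y t\<bar> \<le> MY"
proof -
  have "compact (Y ` {0..as})" by (intro compact_continuous_image Y_cont) auto
  then obtain B where "B > 0" "\<forall>x\<in>Y ` {0..as}. norm x \<le> B"
    using compact_imp_bounded bounded_pos by metis
  then show ?thesis using that by auto
qed

lemma G_bound: obtains MG where "MG > 0" "\<And>t. t \<in> {0..as} \<Longrightarrow> \<bar>G t\<bar> \<le> MG"
  using G_bdd bounded_pos by (metis image_eqI real_norm_def)

lemma eig_parts:
  "inF as (\<lambda>a. complex_of_real (f1 a)) (\<lambda>a. complex_of_real (f1' a))"
  "(LINT x:{0<..<as}|lebesgue. (f1 x)\<^sup>2) > 0"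
  "\<And>\<phi> \<phi>'. inF as \<phi> \<phi>' \<Longrightarrow>
        (LINT x:{0<..<as}|lebesgue.
            complex_of_real (Pfun G x) * complex_of_real (f1' x) * cnj (\<phi>' x)
          + complex_of_real (\<beta>\<^sup>2 * Qfun G x) * complex_of_real (f1 x) * cnj (\<phi> x))
        = complex_of_real K * (LINT x:{0<..<as}|lebesgue. complex_of_real (f1 x) * cnj (\<phi> x))"
  using eigen unfolding weak_eigen_def by (simp_all add: power2_abs)

lemma K_nonneg: "K \<ge> 0"
proof -
  have e: "(LINT x:{0<..<as}|lebesgue.
            complex_of_real (Pfun G x) * complex_of_real (f1' x) * cnj (complex_of_real (f1' x))
          + complex_of_real (\<beta>\<^sup>2 * Qfun G x) * complex_of_real (f1 x) * cnj (complex_of_real (f1 x)))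
        = complex_of_real K * (LINT x:{0<..<as}|lebesgue. complex_of_real (f1 x) * cnj (complex_of_real (f1 x)))"
    by (rule eig_parts(3)[OF eig_parts(1)])
  have l: "(\<lambda>x. complex_of_real (Pfun G x) * complex_of_real (f1' x) * cnj (complex_of_real (f1' x))
          + complex_of_real (\<beta>\<^sup>2 * Qfun G x) * complex_of_real (f1 x) * cnj (complex_of_real (f1 x)))
     = (\<lambda>x. complex_of_real (Pfun G x * (f1' x)\<^sup>2 + \<beta>\<^sup>2 * Qfun G x * (f1 x)\<^sup>2))"
    by (simp add: fun_eq_iff power2_eq_square)
  have r: "(\<lambda>x. complex_of_real (f1 x) * cnj (complex_of_real (f1 x))) = (\<lambda>x. complex_of_real ((f1 x)\<^sup>2))"
    by (simp add: fun_eq_iff power2_eq_square)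
  have "complex_of_real (LINT x:{0<..<as}|lebesgue. Pfun G x * (f1' x)\<^sup>2 + \<beta>\<^sup>2 * Qfun G x * (f1 x)\<^sup>2)
      = complex_of_real (K * (LINT x:{0<..<as}|lebesgue. (f1 x)\<^sup>2))"
    using e unfolding l r set_integral_complex_of_real by simp
  then have eq: "(LINT x:{0<..<as}|lebesgue. Pfun G x * (f1' x)\<^sup>2 + \<beta>\<^sup>2 * Qfun G x * (f1 x)\<^sup>2)
      = K * (LINT x:{0<..<as}|lebesgue. (f1 x)\<^sup>2)"
    using of_real_eq_iff by blast
  have "AE x in lebesgue. 0 \<le> indicator {0<..<as} x *\<^sub>R (Pfun G x * (f1' x)\<^sup>2 + \<beta>\<^sup>2 * Qfun G x * (f1 x)\<^sup>2)"
    using G_ge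
  proof eventually_elim
    case (elim x)
    show ?case
    proof (cases "x \<in> {0<..<as}")
      case True
      then have "G x \<ge> 4*pi" using elim by auto
      then have "G x > 0" using pi_gt_zero by linarith
      then have "Pfun G x \<ge> 0" "Qfun G x \<ge> 0" using True by (auto simp: Pfun_def Qfun_def)
      then show ?thesis by (simp add: indicator_def)
    qed (auto simp: indicator_def)
  qed
  then have "(LINT x:{0<..<as}|lebesgue. Pfun G x * (f1' x)\<^sup>2 + \<beta>\<^sup>2 * Qfun G x * (f1 x)\<^sup>2) \<ge> 0"
    unfolding set_lebesgue_integral_def by (rule integral_nonneg_AE)
  then have "K * (LINT x:{0<..<as}|lebesgue. (f1 x)\<^sup>2) \<ge> 0" using eq by simp
  then show ?thesis using eig_parts(2) by (simp add: zero_le_mult_iff)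
qed

definition Nset where "Nset = (SOME N. negligible N \<and>
   (\<forall>t. t \<in> {0<..<as} \<longrightarrow> t \<notin> N \<longrightarrow> G t \<ge> 4*pi \<and> Y t = t * G t * f1' t))"

lemma Nset: "negligible Nset"
  "\<And>t. t \<in> {0<..<as} \<Longrightarrow> t \<notin> Nset \<Longrightarrow> G t \<ge> 4*pi \<and> Y t = t * G t * f1' t"
proof -
  obtain N where "negligible N"
    "\<And>t. t \<in> {0<..<as} \<Longrightarrow> t \<notin> N \<Longrightarrow> G t \<ge> 4*pi \<and> Y t = t * G t * f1' t"
    using good_set by blast
  then have ex: "\<exists>N. negligible N \<and>
   (\<forall>t. t \<in> {0<..<as} \<longrightarrow> t \<notin> N \<longrightarrow> G t \<ge> 4*pi \<and> Y t = t * G t * f1' t)" by blast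
  show "negligible Nset" "\<And>t. t \<in> {0<..<as} \<Longrightarrow> t \<notin> Nset \<Longrightarrow> G t \<ge> 4*pi \<and> Y t = t * G t * f1' t"
    using someI_ex[OF ex] unfolding Nset_def[symmetric] by blast+
qed

lemma Gm_ge: "Gm t \<ge> 4*pi" unfolding Gm_def by simp

lemma Gm_pos: "Gm t > 0" using Gm_ge[of t] pi_gt_zero by linarith

lemma Gm_eq: "t \<in> {0<..<as} \<Longrightarrow> t \<notin> Nset \<Longrightarrow> Gm t = G t"
  using Nset(2) unfolding Gm_def by (simp add: max_def)

lemma f1'_eq: "t \<in> {0<..<as} \<Longrightarrow> t \<notin> Nset \<Longrightarrow> f1' t = Y t / (t * Gm t)"
  using Nset(2)[of t] Gm_eq[of t] Gm_pos[of t] by (auto simp: field_simps)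

lemma G_meas_on: "G \<in> borel_measurable (lebesgue_on {0..as})"
  using G_meas unfolding set_borel_measurable_def
  by (subst borel_measurable_restrict_space_iff) auto

lemma Gm_meas: "Gm \<in> borel_measurable (lebesgue_on {0..as})"
  unfolding Gm_def[abs_def] by (intro borel_measurable_max borel_measurable_const G_meas_on)

lemma id_meas: "(\<lambda>t::real. t) \<in> borel_measurable (lebesgue_on S)" if "S \<in> sets lebesgue" for S
  by (rule continuous_imp_measurable_on_sets_lebesgue[OF continuous_on_id that])

lemma mult_meas: "(\<lambda>t. \<beta>\<^sup>2 * t / Gm t - K) \<in> borel_measurable (lebesgue_on {0..as})"
  by (intro borel_measurable_diff borel_measurable_divide borel_measurable_times borel_measurable_const
     id_meas Gm_meas) auto

lemma f1_cont_I: "continuous_on {0<..<as} f1"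
  using X_isCont by (simp add: continuous_at_imp_continuous_on)

lemma of_real_set_integrable:
  "set_integrable M A f \<Longrightarrow> set_integrable M A (\<lambda>t. complex_of_real (f t))"
proof -
  assume "set_integrable M A f"
  then have "integrable M (\<lambda>x. complex_of_real (indicator A x *\<^sub>R f x))"
    unfolding set_integrable_def by (subst complex_of_real_integrable_eq)
  moreover have "(\<lambda>x. indicator A x *\<^sub>R complex_of_real (f x)) = (\<lambda>x. complex_of_real (indicator A x *\<^sub>R f x))"
    by (simp add: fun_eq_iff scaleR_conv_of_real)
  ultimately show ?thesis unfolding set_integrable_def by simp
qed

lemma f1_absint_I: "f1 absolutely_integrable_on {0<..<as}"
proof -
  have "set_integrable lebesgue {0<..<as} (\<lambda>x. (cmod (complex_of_real (f1 x)))\<^sup>2)"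
    using eig_parts(1) unfolding inF_def by blast
  then have "(\<lambda>x. (f1 x)\<^sup>2) absolutely_integrable_on {0<..<as}" by (simp add: power2_abs)
  then have i1: "(\<lambda>x. (f1 x)\<^sup>2) integrable_on {0<..<as}" using set_lebesgue_integral_eq_integral(1) by blast
  have i2: "(\<lambda>x. 1::real) integrable_on {0<..<as}"
    by (simp add: integrable_on_open_interval_real integrable_on_const)
  have "(\<lambda>x. 1 + (f1 x)\<^sup>2) integrable_on {0<..<as}" by (rule integrable_add[OF i2 i1])
  moreover have "norm (f1 x) \<le> 1 + (f1 x)\<^sup>2" for x
  proof -
    have "0 \<le> (\<bar>f1 x\<bar> - 1)\<^sup>2" by simp
    then show ?thesis by (simp add: power2_eq_square algebra_simps)
  qed
  ultimately show ?thesis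
    by (intro measurable_bounded_by_integrable_imp_absolutely_integrable[where g="\<lambda>x. 1 + (f1 x)\<^sup>2"]
         continuous_imp_measurable_on_sets_lebesgue f1_cont_I) auto
qed

lemma f1_absint: "f1 absolutely_integrable_on {0..as}"
  using f1_absint_I absolutely_integrable_on_open_interval[where f=f1 and a=0 and b=as] by simp

definition gg where "gg t = (\<beta>\<^sup>2 * t / Gm t - K) * f1 t"

lemma bdd_mult: "bounded ((\<lambda>t. \<beta>\<^sup>2 * t / Gm t - K) ` {0..as})"
proof -
  have "\<bar>\<beta>\<^sup>2 * t / Gm t - K\<bar> \<le> \<beta>\<^sup>2 * as / (4*pi) + \<bar>K\<bar>" if "t \<in> {0..as}" for t
  proof -
    have "\<beta>\<^sup>2 * t / Gm t \<le> \<beta>\<^sup>2 * as / (4*pi)"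
      using that Gm_ge[of t] pi_gt_zero
      by (intro frac_le mult_left_mono) auto
    moreover have "\<beta>\<^sup>2 * t / Gm t \<ge> 0" using that Gm_pos[of t] by auto
    ultimately show ?thesis by linarith
  qed
  then show ?thesis unfolding bounded_iff by (intro exI[of _ "\<beta>\<^sup>2 * as / (4*pi) + \<bar>K\<bar>"]) auto
qed

lemma gg_absint: "gg absolutely_integrable_on {0..as}"
  unfolding gg_def[abs_def]
  by (rule absolutely_integrable_bounded_measurable_product_real[OF mult_meas _ bdd_mult f1_absint]) simp

definition phr :: "real \<Rightarrow> real \<Rightarrow> real \<Rightarrow> real" where
  "phr c x t = min 1 (max 0 ((x - t) / (x - c)))"
definition dphr :: "real \<Rightarrow> real \<Rightarrow> real \<Rightarrow> real" where
  "dphr c x t = (if t \<in> {c..x} then -1 / (x - c) else 0)"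

lemma phr_cont: "c < x \<Longrightarrow> continuous_on S (phr c x)"
  unfolding phr_def[abs_def] by (intro continuous_intros) auto

lemma phr_range: "0 \<le> phr c x t" "phr c x t \<le> 1"
  unfolding phr_def by auto

lemma phr_left: "c < x \<Longrightarrow> t \<le> c \<Longrightarrow> phr c x t = 1"
  unfolding phr_def by (auto simp: field_simps)

lemma phr_right: "c < x \<Longrightarrow> x \<le> t \<Longrightarrow> phr c x t = 0"
  unfolding phr_def by (auto simp: field_simps)

lemma phr_deriv:
  assumes "c < x" "t \<notin> {c, x}"
  shows "(phr c x has_vector_derivative dphr c x t) (at t)"
proof -
  consider "t < c" | "c < t \<and> t < x" | "x < t" using assms by force
  then have "(phr c x has_real_derivative dphr c x t) (at t)"
  proof cases
    case 1
    have "((\<lambda>_. 1::real) has_real_derivative dphr c x t) (at t)" using 1 by (simp add: dphr_def)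
    then show ?thesis
      by (rule has_field_derivative_transform_within_open[where S="{..<c}"])
         (use 1 assms in \<open>auto simp: dphr_def phr_left\<close>)
  next
    case 2
    have "((\<lambda>s. (x - s) / (x - c)) has_real_derivative dphr c x t) (at t)"
    proof -
      have "((\<lambda>s. (x - s) / (x - c)) has_real_derivative ((0 - 1) / (x - c))) (at t)"
        by (intro DERIV_cdivide DERIV_diff DERIV_const DERIV_ident)
      moreover have "dphr c x t = (0 - 1) / (x - c)" using 2 by (simp add: dphr_def)
      ultimately show ?thesis by simp
    qed
    then show ?thesis
    proof (rule has_field_derivative_transform_within_open[where S="{c<..<x}"])
      show "t \<in> {c<..<x}" using 2 by auto
      fix s assume "s \<in> {c<..<x}"
      then show "(x - s) / (x - c) = phr c x s" unfolding phr_def by (auto simp: field_simps)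
    qed (use 2 in \<open>auto simp: dphr_def\<close>)
  next
    case 3
    have "((\<lambda>_. 0::real) has_real_derivative dphr c x t) (at t)" using 3 by (simp add: dphr_def)
    then show ?thesis
      by (rule has_field_derivative_transform_within_open[where S="{x<..}"])
         (use 3 assms in \<open>auto simp: dphr_def phr_right\<close>)
  qed
  then show ?thesis by (simp add: has_real_derivative_iff_has_vector_derivative)
qed

lemma dphr_int:
  assumes "c < x" "u \<le> v"
  shows "(dphr c x has_integral (phr c x v - phr c x u)) {u..v}"
  by (rule fundamental_theorem_of_calculus_interior_strong[where S="{c,x}"])
     (use assms phr_deriv phr_cont in auto)

lemma dphr_absint:
  assumes "c < x" "u \<le> v"
  shows "dphr c x absolutely_integrable_on {u..v}"
proof -
  have "(\<lambda>t. - dphr c x t) integrable_on {u..v}"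
    using dphr_int[OF assms] by (intro integrable_neg) (auto simp: integrable_on_def)
  moreover have "0 \<le> - dphr c x t" for t using assms by (simp add: dphr_def)
  ultimately have "(\<lambda>t. - dphr c x t) absolutely_integrable_on {u..v}"
    by (intro nonnegative_absolutely_integrable_1) auto
  then have "(\<lambda>t. (-1) * (- dphr c x t)) absolutely_integrable_on {u..v}"
    by (rule set_integrable_mult_right)
  then show ?thesis by simp
qed

lemma test_inF:
  assumes "0 < c" "c < x" "x < as"
  shows "inF as (\<lambda>t. complex_of_real (phr c x t)) (\<lambda>t. complex_of_real (dphr c x t))"
  unfolding inF_def has_weak_deriv_def
proof (intro conjI)
  show "\<exists>g. (AE xa in lebesgue. xa \<in> {0<..<as} \<longrightarrow> complex_of_real (phr c x xa) = g xa) \<and>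
        (\<forall>xa\<in>{0<..<as}. \<forall>y\<in>{0<..<as}. xa \<le> y \<longrightarrow>
            set_integrable lebesgue {xa..y} (\<lambda>t. complex_of_real (dphr c x t)) \<and>
            g y - g xa = (LINT t:{xa..y}|lebesgue. complex_of_real (dphr c x t)))"
  proof (intro exI[of _ "\<lambda>t. complex_of_real (phr c x t)"] conjI ballI impI AE_I2)
    fix u v :: real assume "u \<le> v"
    have ai: "dphr c x absolutely_integrable_on {u..v}" using dphr_absint[of c x u v] assms \<open>u \<le> v\<close> by auto
    then show "set_integrable lebesgue {u..v} (\<lambda>t. complex_of_real (dphr c x t))"
      by (rule of_real_set_integrable)
    have "(LINT t:{u..v}|lebesgue. dphr c x t) = phr c x v - phr c x u"
      using set_lebesgue_integral_eq_integral(2)[OF ai] dphr_int[OF \<open>c < x\<close> \<open>u \<le> v\<close>]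
      by (simp add: integral_unique)
    then show "complex_of_real (phr c x v) - complex_of_real (phr c x u) =
           (LINT t:{u..v}|lebesgue. complex_of_real (dphr c x t))"
      by (simp add: set_integral_complex_of_real)
  qed auto
  have "(\<lambda>t. (phr c x t)\<^sup>2) absolutely_integrable_on {0..as}"
    using assms by (intro absolutely_integrable_continuous_real continuous_intros phr_cont)
  then have "(\<lambda>t. (phr c x t)\<^sup>2) absolutely_integrable_on {0<..<as}"
    by (rule set_integrable_subset) auto
  then show "set_integrable lebesgue {0<..<as} (\<lambda>xa. (cmod (complex_of_real (phr c x xa)))\<^sup>2)"
    by (simp add: power2_abs)
  have "(\<lambda>t. t / (x - c)\<^sup>2) absolutely_integrable_on {c..x}"
    using assms by (intro absolutely_integrable_continuous_real continuous_intros) auto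
  then have "(\<lambda>t. if t \<in> {c..x} then t / (x - c)\<^sup>2 else 0) absolutely_integrable_on UNIV"
    by (rule absolutely_integrable_restrict_UNIV[THEN iffD2])
  then have "(\<lambda>t. if t \<in> {c..x} then t / (x - c)\<^sup>2 else 0) absolutely_integrable_on {0<..<as}"
    by (rule set_integrable_subset) auto
  moreover have "(if t \<in> {c..x} then t / (x - c)\<^sup>2 else 0) = t * (cmod (complex_of_real (dphr c x t)))\<^sup>2" for t
    by (simp add: dphr_def power2_eq_square)
  ultimately show "set_integrable lebesgue {0<..<as} (\<lambda>t. t * (cmod (complex_of_real (dphr c x t)))\<^sup>2)"
    by simp
qed

lemma Gm_meas_I: "Gm \<in> borel_measurable (lebesgue_on {0<..<as})"
  by (rule measurable_restrict_mono[OF Gm_meas]) auto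

lemma test_identity:
  assumes "0 < c" "c < x" "x < as"
  shows "integral {c..x} Y / (x - c) = integral {0..c} gg + integral {c..x} (\<lambda>t. gg t * phr c x t)"
proof -
  define I where "I = {0<..<as}"
  have Isets: "I \<in> sets lebesgue" unfolding I_def by simp
  define A1 where "A1 t = Pfun G t * f1' t * dphr c x t" for t
  define A2 where "A2 t = \<beta>\<^sup>2 * Qfun G t * f1 t * phr c x t" for t
  define A2' where "A2' t = \<beta>\<^sup>2 * t / Gm t * phr c x t * f1 t" for t
  define B where "B t = f1 t * phr c x t" for t
  define YD where "YD t = (if t \<in> {c..x} then - Y t / (x - c) else 0)" for t
  have e: "(LINT t:I|lebesgue.
            complex_of_real (Pfun G t) * complex_of_real (f1' t) * cnj (complex_of_real (dphr c x t))
          + complex_of_real (\<beta>\<^sup>2 * Qfun G t) * complex_of_real (f1 t) * cnj (complex_of_real (phr c x t)))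
        = complex_of_real K * (LINT t:I|lebesgue. complex_of_real (f1 t) * cnj (complex_of_real (phr c x t)))"
    unfolding I_def by (rule eig_parts(3)[OF test_inF[OF assms]])
  have l: "(\<lambda>t. complex_of_real (Pfun G t) * complex_of_real (f1' t) * cnj (complex_of_real (dphr c x t))
          + complex_of_real (\<beta>\<^sup>2 * Qfun G t) * complex_of_real (f1 t) * cnj (complex_of_real (phr c x t)))
      = (\<lambda>t. complex_of_real (A1 t + A2 t))"
    by (simp add: fun_eq_iff A1_def A2_def)
  have r: "(\<lambda>t. complex_of_real (f1 t) * cnj (complex_of_real (phr c x t))) = (\<lambda>t. complex_of_real (B t))"
    by (simp add: fun_eq_iff B_def)
  have "complex_of_real (LINT t:I|lebesgue. A1 t + A2 t) = complex_of_real (K * (LINT t:I|lebesgue. B t))"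
    using e unfolding l r set_integral_complex_of_real by simp
  then have eqr: "(LINT t:I|lebesgue. A1 t + A2 t) = K * (LINT t:I|lebesgue. B t)"
    using of_real_eq_iff by blast
  have phr_meas: "phr c x \<in> borel_measurable (lebesgue_on S)" if "S \<in> sets lebesgue" for S
    by (rule continuous_imp_measurable_on_sets_lebesgue[OF phr_cont[OF assms(2)] that])
  have phr_bdd: "bounded (phr c x ` S)" for S
    unfolding bounded_iff using phr_range by (intro exI[of _ 1]) auto
  have f1I: "f1 absolutely_integrable_on I" unfolding I_def by (rule f1_absint_I)
  have B_ai: "B absolutely_integrable_on I"
  proof -
    have "(\<lambda>t. phr c x t * f1 t) absolutely_integrable_on I"
      by (rule absolutely_integrable_bounded_measurable_product_real[OF phr_meas[OF Isets] Isets phr_bdd f1I])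
    then show ?thesis unfolding B_def by (simp add: mult.commute)
  qed
  have YD_ai: "YD absolutely_integrable_on I"
  proof -
    have "(\<lambda>t. - Y t / (x - c)) absolutely_integrable_on {c..x}"
    proof (intro absolutely_integrable_continuous_real continuous_intros)
      show "continuous_on {c..x} Y" by (rule continuous_on_subset[OF Y_cont]) (use assms in auto)
    qed (use assms in auto)
    then have "YD absolutely_integrable_on UNIV"
      unfolding YD_def by (rule absolutely_integrable_restrict_UNIV[THEN iffD2])
    then show ?thesis by (rule set_integrable_subset) (auto simp: Isets)
  qed
  have YD_eq: "YD t = Y t * dphr c x t" for t unfolding YD_def dphr_def by auto
  have A1_ai: "A1 absolutely_integrable_on I"
  proof (rule absolutely_integrable_spike[OF YD_ai Nset(1)])
    fix t assume "t \<in> I - Nset"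
    then show "A1 t = YD t" using Nset(2)[of t] unfolding A1_def YD_eq I_def Pfun_def by auto
  qed
  have m2: "(\<lambda>t. \<beta>\<^sup>2 * t / Gm t * phr c x t) \<in> borel_measurable (lebesgue_on I)"
    unfolding I_def
    by (intro borel_measurable_times borel_measurable_divide borel_measurable_const
         id_meas Gm_meas_I phr_meas) auto
  have b2: "bounded ((\<lambda>t. \<beta>\<^sup>2 * t / Gm t * phr c x t) ` I)"
  proof -
    have "\<bar>\<beta>\<^sup>2 * t / Gm t * phr c x t\<bar> \<le> \<beta>\<^sup>2 * as / (4*pi)" if "t \<in> I" for t
    proof -
      have "0 \<le> \<beta>\<^sup>2 * t / Gm t" using that Gm_pos[of t] unfolding I_def by auto
      moreover have "\<beta>\<^sup>2 * t / Gm t \<le> \<beta>\<^sup>2 * as / (4*pi)"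
        using that Gm_ge[of t] pi_gt_zero unfolding I_def
        by (intro frac_le mult_left_mono) auto
      moreover have "\<beta>\<^sup>2 * t / Gm t * phr c x t \<le> \<beta>\<^sup>2 * t / Gm t * 1"
        using phr_range[of c x t] calculation(1) by (intro mult_left_mono) auto
      moreover have "0 \<le> \<beta>\<^sup>2 * t / Gm t * phr c x t"
        using phr_range[of c x t] calculation(1) by (intro mult_nonneg_nonneg)
      ultimately show ?thesis by linarith

    qed
    then show ?thesis unfolding bounded_iff by (intro exI[of _ "\<beta>\<^sup>2 * as / (4*pi)"]) auto
  qed
  have A2'_ai: "A2' absolutely_integrable_on I"
    unfolding A2'_def
    by (rule absolutely_integrable_bounded_measurable_product_real[OF m2 Isets b2 f1I])
  have A2_ai: "A2 absolutely_integrable_on I"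
  proof (rule absolutely_integrable_spike[OF A2'_ai Nset(1)])
    fix t assume "t \<in> I - Nset"
    then show "A2 t = A2' t" using Gm_eq[of t] unfolding A2_def A2'_def I_def Qfun_def by auto
  qed
  have A12: "(\<lambda>t. A1 t + A2 t) absolutely_integrable_on I" using A1_ai A2_ai by (rule set_integral_add(1))
  have i1: "(LINT t:I|lebesgue. A1 t + A2 t) = integral I A1 + integral I A2"
    using set_lebesgue_integral_eq_integral(2)[OF A12]
      integral_add[OF set_lebesgue_integral_eq_integral(1)[OF A1_ai] set_lebesgue_integral_eq_integral(1)[OF A2_ai]]
    by simp
  have i2: "(LINT t:I|lebesgue. B t) = integral I B" by (rule set_lebesgue_integral_eq_integral(2)[OF B_ai])
  have iA1: "integral I A1 = integral I YD"
    by (rule integral_spike[OF Nset(1)]) (use Nset(2) in \<open>auto simp: I_def A1_def YD_eq Pfun_def\<close>)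
  have iA2: "integral I A2 = integral I A2'"
    by (rule integral_spike[OF Nset(1)]) (use Gm_eq in \<open>auto simp: I_def A2_def A2'_def Qfun_def\<close>)
  have iYD: "integral I YD = - (integral {c..x} Y / (x - c))"
  proof -
    have "integral I YD = integral ({c..x} \<inter> I) (\<lambda>t. - Y t / (x - c))"
      unfolding YD_def by (rule integral_restrict_Int)
    also have "{c..x} \<inter> I = {c..x}" using assms unfolding I_def by auto
    also have "integral {c..x} (\<lambda>t. - Y t / (x - c)) = - (integral {c..x} Y / (x - c))"
      by simp
    finally show ?thesis .
  qed
  have keyI: "integral I (\<lambda>t. gg t * phr c x t) = integral {c..x} Y / (x - c)"
  proof -
    have "integral I (\<lambda>t. gg t * phr c x t) = integral I (\<lambda>t. A2' t - K * B t)"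
      by (rule integral_cong) (simp add: gg_def A2'_def B_def algebra_simps)
    also have "\<dots> = integral I A2' - K * integral I B"
      using integral_diff[OF set_lebesgue_integral_eq_integral(1)[OF A2'_ai]
          integrable_on_cmult_left[OF set_lebesgue_integral_eq_integral(1)[OF B_ai]]]
      by simp
    also have "\<dots> = integral {c..x} Y / (x - c)"
      using eqr i1 i2 iA1 iA2 iYD by simp
    finally show ?thesis .
  qed
  have ggphr: "(\<lambda>t. gg t * phr c x t) integrable_on {0..as}"
  proof -
    have "(\<lambda>t. phr c x t * gg t) absolutely_integrable_on {0..as}"
      by (rule absolutely_integrable_bounded_measurable_product_real[OF phr_meas _ phr_bdd gg_absint]) auto
    then show ?thesis using set_lebesgue_integral_eq_integral(1) by (simp add: mult.commute)
  qed
  have "integral I (\<lambda>t. gg t * phr c x t) = integral {0..as} (\<lambda>t. gg t * phr c x t)"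
    unfolding I_def by (simp add: integral_open_interval_real)
  also have "\<dots> = integral {0..c} (\<lambda>t. gg t * phr c x t) + integral {c..as} (\<lambda>t. gg t * phr c x t)"
    by (rule Henstock_Kurzweil_Integration.integral_combine[symmetric]) (use assms ggphr in auto)
  also have "integral {c..as} (\<lambda>t. gg t * phr c x t) =
     integral {c..x} (\<lambda>t. gg t * phr c x t) + integral {x..as} (\<lambda>t. gg t * phr c x t)"
    by (rule Henstock_Kurzweil_Integration.integral_combine[symmetric]) (use assms integrable_on_subinterval[OF ggphr] in auto)
  also have "integral {0..c} (\<lambda>t. gg t * phr c x t) = integral {0..c} gg"
    by (rule integral_cong) (use assms phr_left in auto)
  also have "integral {x..as} (\<lambda>t. gg t * phr c x t) = 0"
  proof -
    have "integral {x..as} (\<lambda>t. gg t * phr c x t) = integral {x..as} (\<lambda>t. 0::real)"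
      by (rule integral_cong) (use assms phr_right in auto)
    then show ?thesis by simp
  qed
  finally show ?thesis using keyI by simp
qed

lemma ggphr_int: "c < x \<Longrightarrow> (\<lambda>t. gg t * phr c x t) integrable_on {0..as}"
proof -
  assume cx: "c < x"
  have "(\<lambda>t. phr c x t * gg t) absolutely_integrable_on {0..as}"
  proof (rule absolutely_integrable_bounded_measurable_product_real[OF _ _ _ gg_absint])
    show "phr c x \<in> borel_measurable (lebesgue_on {0..as})"
      by (rule continuous_imp_measurable_on_sets_lebesgue[OF phr_cont[OF cx]]) auto
    show "bounded (phr c x ` {0..as})"
      unfolding bounded_iff using phr_range by (intro exI[of _ 1]) auto
  qed auto
  then show ?thesis using set_lebesgue_integral_eq_integral(1) by (simp add: mult.commute)
qed

lemma gg_abs_int: "(\<lambda>t. \<bar>gg t\<bar>) integrable_on {0..as}"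
  using set_integrable_abs[OF gg_absint] set_lebesgue_integral_eq_integral(1) by blast

lemma Y_ode: assumes "0 < c" "c < as" shows "Y c = integral {0..c} gg"
proof -
  have "((\<lambda>x. integral {c..x} Y) has_real_derivative Y c) (at c within {c..as})"
    by (rule integral_has_real_derivative) (use assms continuous_on_subset[OF Y_cont] in auto)
  then have "((\<lambda>y. (integral {c..y} Y - integral {c..c} Y) / (y - c)) \<longlongrightarrow> Y c) (at c within {c..as})"
    by (simp add: has_field_derivative_iff)
  then have L1: "((\<lambda>y. integral {c..y} Y / (y - c)) \<longlongrightarrow> Y c) (at_right c)"
    using at_within_Icc_at_right[OF assms(2)] by simp
  define H where "H x = integral {c..x} (\<lambda>t. \<bar>gg t\<bar>)" for x
  have "continuous_on {c..as} H" unfolding H_def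
    by (rule indefinite_integral_continuous_1) (rule integrable_on_subinterval[OF gg_abs_int], use assms in auto)
  then have "(H \<longlongrightarrow> H c) (at c within {c..as})"
    using assms by (auto simp: continuous_on_def)
  then have H0: "(H \<longlongrightarrow> 0) (at_right c)"
    using at_within_Icc_at_right[OF assms(2)] by (simp add: H_def)
  define R where "R x = integral {c..x} (\<lambda>t. gg t * phr c x t)" for x
  have ev: "eventually (\<lambda>x. x \<in> {c<..<as}) (at_right c)" by (rule eventually_at_right_real[OF assms(2)])
  have "eventually (\<lambda>x. norm (R x) \<le> H x) (at_right c)"
    using ev
  proof eventually_elim
    case (elim x)
    show ?case unfolding R_def H_def
    proof (rule integral_norm_bound_integral)
      show "(\<lambda>t. gg t * phr c x t) integrable_on {c..x}"
        by (rule integrable_on_subinterval[OF ggphr_int]) (use elim assms in auto)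
      show "(\<lambda>t. \<bar>gg t\<bar>) integrable_on {c..x}"
        by (rule integrable_on_subinterval[OF gg_abs_int]) (use elim assms in auto)
      fix t
      show "norm (gg t * phr c x t) \<le> \<bar>gg t\<bar>"
        using phr_range[of c x t] by (simp add: abs_mult mult_left_le)
    qed
  qed
  then have R0: "(R \<longlongrightarrow> 0) (at_right c)" by (rule Lim_null_comparison[OF _ H0])
  have "((\<lambda>x. integral {0..c} gg + R x) \<longlongrightarrow> integral {0..c} gg + 0) (at_right c)"
    by (intro tendsto_add tendsto_const R0)
  moreover have "eventually (\<lambda>x. integral {0..c} gg + R x = integral {c..x} Y / (x - c)) (at_right c)"
    using ev by eventually_elim (use test_identity assms in \<open>auto simp: R_def\<close>)
  ultimately have "((\<lambda>y. integral {c..y} Y / (y - c)) \<longlongrightarrow> integral {0..c} gg) (at_right c)"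
    using tendsto_cong by fastforce
  then show ?thesis using L1 tendsto_unique trivial_limit_at_right_real by blast
qed

lemma integral_le_neg:
  fixes f g :: "real \<Rightarrow> real"
  assumes "f integrable_on S" "g integrable_on S" "negligible N" "\<And>x. x \<in> S \<Longrightarrow> x \<notin> N \<Longrightarrow> f x \<le> g x"
  shows "integral S f \<le> integral S g"
proof -
  define f' where "f' x = (if x \<in> N then g x else f x)" for x
  have "integral S f' = integral S f"
    by (rule integral_spike[OF assms(3)]) (auto simp: f'_def)
  moreover have "f' integrable_on S"
    by (rule integrable_spike[OF assms(1) assms(3)]) (auto simp: f'_def)
  moreover have "integral S f' \<le> integral S g"
    by (rule integral_le[OF \<open>f' integrable_on S\<close> assms(2)]) (use assms(4) in \<open>auto simp: f'_def\<close>)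
  ultimately show ?thesis by simp
qed

lemma gg_int: "gg integrable_on {x..y}" if "0 \<le> x" "y \<le> as" for x y
proof (cases "x \<le> y")
  case True
  then show ?thesis using integrable_on_subinterval[OF set_lebesgue_integral_eq_integral(1)[OF gg_absint]] that by auto
next
  case False
  then show ?thesis by (simp add: integrable_on_empty)
qed

lemma f1'_int: "f1' integrable_on {x..y}" if "0 < x" "x \<le> y" "y \<le> as" for x y
  using f1_int[OF that] set_lebesgue_integral_eq_integral(1) by blast

lemma Y_diff: "Y y - Y x = integral {x..y} gg" if "0 < x" "x \<le> y" "y < as" for x y
proof -
  have "integral {0..x} gg + integral {x..y} gg = integral {0..y} gg"
    by (rule Henstock_Kurzweil_Integration.integral_combine) (use that gg_int[of 0 y] in auto)
  then show ?thesis using Y_ode[of x] Y_ode[of y] that by auto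
qed

lemma gg_eq: "gg u = (\<beta>\<^sup>2 * u / Gm u - K) * f1 u" by (simp add: gg_def)

lemma U2: assumes "0 < a0" "a0 < as" "\<And>t. 0 < t \<Longrightarrow> t \<le> a0 \<Longrightarrow> Y t \<ge> \<beta> * t * f1 t"
  shows False
proof -
  have Kge: "K \<ge> 0" by (rule K_nonneg)
  have mono: "f1 x \<le> f1 y" if "0 < x" "x \<le> y" "y \<le> a0" for x y
  proof -
    have "0 = integral {x..y} (\<lambda>_. 0::real)" by simp
    also have "\<dots> \<le> integral {x..y} f1'"
    proof (rule integral_le_neg[OF _ f1'_int Nset(1)])
      fix u assume u: "u \<in> {x..y}" "u \<notin> Nset"
      then have u0: "0 < u" "u < as" using that assms by auto
      have "Y u \<ge> \<beta> * u * f1 u" using assms(3)[of u] u0 u that by auto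
      moreover have "\<beta> * u * f1 u > 0" using beta_pos u0 f1_pos by auto
      ultimately have "Y u > 0" by linarith
      then show "0 \<le> f1' u" using f1'_eq[of u] u u0 Gm_pos[of u] by auto
    qed (use that assms in auto)
    also have "\<dots> = f1 y - f1 x" using f1_int[of x y] that assms by auto
    finally show ?thesis by simp
  qed
  define t where "t = min a0 (2 * pi / \<beta>)"
  have t0: "0 < t" "t \<le> a0" using assms beta_pos pi_gt_zero by (auto simp: t_def)
  have tb: "\<beta> * t \<le> 2 * pi" using beta_pos by (auto simp: t_def min_def field_simps)
  have ft: "f1 t > 0" using f1_pos t0 assms by auto
  have "Y t = integral {0..t} gg" using Y_ode[of t] t0 assms by auto
  also have "\<dots> \<le> integral {0..t} (\<lambda>_. \<beta>\<^sup>2 * t * f1 t / (4 * pi))"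
  proof (rule integral_le_neg[where N="{0}"])
    show "gg integrable_on {0..t}" using gg_int[of 0 t] t0 assms by auto
    fix u assume u: "u \<in> {0..t}" "u \<notin> {0}"
    then have u0: "0 < u" "u \<le> t" by auto
    have fu: "0 < f1 u" "f1 u \<le> f1 t" using f1_pos mono[of u t] u0 t0 assms by auto
    have "gg u = \<beta>\<^sup>2 * u / Gm u * f1 u - K * f1 u" by (simp add: gg_def algebra_simps)
    also have "\<dots> \<le> \<beta>\<^sup>2 * u / Gm u * f1 u" using Kge fu by simp
    also have "\<dots> \<le> \<beta>\<^sup>2 * t / (4 * pi) * f1 t"
    proof (rule mult_mono)
      show "\<beta>\<^sup>2 * u / Gm u \<le> \<beta>\<^sup>2 * t / (4 * pi)"
        using Gm_ge[of u] u0 pi_gt_zero by (intro frac_le mult_left_mono) auto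
    qed (use fu u0 t0 Gm_pos[of u] pi_gt_zero in auto)
    finally show "gg u \<le> \<beta>\<^sup>2 * t * f1 t / (4 * pi)" by simp
  qed auto
  also have "\<dots> = t * (\<beta>\<^sup>2 * t * f1 t / (4 * pi))" using t0 by simp
  finally have "Y t \<le> (\<beta> * t * f1 t) * (\<beta> * t / (4 * pi))" by (simp add: power2_eq_square field_simps)
  also have "\<dots> \<le> (\<beta> * t * f1 t) * (1/2)"
    using tb beta_pos t0 ft pi_gt_zero by (intro mult_left_mono) (auto simp: field_simps)
  finally have "Y t \<le> (\<beta> * t * f1 t) / 2" by simp
  moreover have "Y t \<ge> \<beta> * t * f1 t" using assms(3) t0 by auto
  moreover have "\<beta> * t * f1 t > 0" using beta_pos t0 ft by auto
  ultimately show False by linarith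
qed

lemma L2: assumes "0 < a0" "a0 < as" "\<And>t. 0 < t \<Longrightarrow> t \<le> a0 \<Longrightarrow> Y t \<le> - (\<beta> * t * f1 t)"
  shows False
proof -
  have Kge: "K \<ge> 0" by (rule K_nonneg)
  obtain MY where MY: "MY > 0" "\<And>t. t \<in> {0..as} \<Longrightarrow> \<bar>Y t\<bar> \<le> MY" using Y_bound by blast
  define q where "q = K / \<beta>"
  define p where "p = (1 - q) / 2"
  define r where "r = q / (1 - p)"
  have q: "0 \<le> q" "q < 1" using Kge small beta_pos by (auto simp: q_def field_simps)
  have p: "0 < p" "p < 1" using q by (auto simp: p_def)
  have r: "0 \<le> r" "r < 1" using q p by (auto simp: r_def p_def field_simps)
  define Bd where "Bd C \<longleftrightarrow> (\<forall>u. 0 < u \<longrightarrow> u \<le> a0 \<longrightarrow> f1 u \<le> C * u powr (-p))" for C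
  define C0 where "C0 = a0 powr p * (f1 a0 + MY / (4 * pi * p))"
  have fa0: "f1 a0 > 0" using f1_pos assms by auto
  have init: "Bd C0" unfolding Bd_def
  proof (intro allI impI)
    fix u assume u: "0 < u" "u \<le> a0"
    define M where "M = MY / (4 * pi) * a0 powr p"
    have M0: "M \<ge> 0" using MY by (simp add: M_def)
    have H: "((\<lambda>v. - M * v powr (-p-1)) has_integral (- M * ((u powr (-p) - a0 powr (-p)) / p))) {u..a0}"
      by (intro has_integral_mult_right P3 u p)
    have I1: "integral {u..a0} (\<lambda>v. - M * v powr (-p-1)) = - M * ((u powr (-p) - a0 powr (-p)) / p)"
      by (rule integral_unique[OF H])
    have I1i: "(\<lambda>v. - M * v powr (-p-1)) integrable_on {u..a0}"
      using H by (rule has_integral_integrable)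
    have "integral {u..a0} (\<lambda>v. - M * v powr (-p-1)) \<le> integral {u..a0} f1'"
    proof (rule integral_le_neg[OF I1i f1'_int Nset(1)])
      fix v assume v: "v \<in> {u..a0}" "v \<notin> Nset"
      then have v0: "0 < v" "v < as" using u assms by auto
      have e: "f1' v = Y v / (v * Gm v)" using f1'_eq[of v] v v0 by auto
      have vg: "v * Gm v > 0" using v0 Gm_pos[of v] by simp
      have "Y v \<ge> - MY" using MY(2)[of v] v0 by auto
      then have "(- MY) / (v * Gm v) \<le> Y v / (v * Gm v)" using vg by (intro divide_right_mono) auto
      then have "f1' v \<ge> - MY / (v * Gm v)" unfolding e by simp
      moreover have "MY / (v * Gm v) \<le> MY / (v * (4 * pi))"
      proof (rule divide_left_mono)
        show "v * (4 * pi) \<le> v * Gm v" using v0 Gm_ge[of v] by (intro mult_left_mono) auto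
        show "0 \<le> MY" using MY by simp
        have "0 < v * (4 * pi)" using v0 pi_gt_zero by simp
        then show "0 < v * Gm v * (v * (4 * pi))" by (rule mult_pos_pos[OF vg])
      qed
      moreover have "MY / (v * (4 * pi)) \<le> M * v powr (-p-1)"
      proof -
        have "1 \<le> a0 powr p * v powr (-p)" using P2[of v a0 p] v0 v p by auto
        then have "MY / (4 * pi) * 1 \<le> MY / (4 * pi) * (a0 powr p * v powr (-p))"
          using MY pi_gt_zero by (intro mult_left_mono) auto
        then have "MY / (4 * pi) / v \<le> MY / (4 * pi) * (a0 powr p * v powr (-p)) / v"
          using v0 by (intro divide_right_mono) auto
        moreover have "M * v powr (-p-1) = MY / (4 * pi) * (a0 powr p * v powr (-p)) / v"
          using P1[of v p] v0 by (simp add: M_def)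
        ultimately show ?thesis by (simp add: field_simps)
      qed
      ultimately show "- M * v powr (-p-1) \<le> f1' v" by linarith
    qed (use u assms in auto)
    also have "\<dots> = f1 a0 - f1 u" using f1_int[of u a0] u assms by auto
    finally have "f1 u \<le> f1 a0 + M * ((u powr (-p) - a0 powr (-p)) / p)" using I1 by simp
    also have "\<dots> \<le> f1 a0 + M * (u powr (-p) / p)"
      using M0 p by (intro add_left_mono mult_left_mono divide_right_mono) auto
    also have "f1 a0 \<le> f1 a0 * (a0 powr p * u powr (-p))"
      using P2[of u a0 p] u p fa0 by (simp add: mult_le_cancel_left1)
    finally have "f1 u \<le> f1 a0 * (a0 powr p * u powr (-p)) + M * (u powr (-p) / p)" by simp
    also have "\<dots> = C0 * u powr (-p)" unfolding C0_def M_def using p by (simp add: field_simps)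
    finally show "f1 u \<le> C0 * u powr (-p)" .
  qed
  have step: "Bd (r * C)" if "Bd C" for C
    unfolding Bd_def
  proof (intro allI impI)
    fix t assume t: "0 < t" "t \<le> a0"
    have "((\<lambda>x. x powr (-p)) has_integral (t powr (-p + 1) / (-p + 1))) {0..t}"
      by (rule has_integral_powr_from_0) (use p t in auto)
    then have H: "((\<lambda>x. K * C * x powr (-p)) has_integral (K * C * (t powr (-p + 1) / (-p + 1)))) {0..t}"
      by (rule has_integral_mult_right)
    have I2: "integral {0..t} (\<lambda>x. K * C * x powr (-p)) = K * C * (t powr (-p + 1) / (-p + 1))"
      by (rule integral_unique[OF H])
    have I2i: "(\<lambda>x. K * C * x powr (-p)) integrable_on {0..t}"
      using H by (rule has_integral_integrable)
    have "\<beta> * t * f1 t \<le> - Y t" using assms(3)[OF t] by simp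
    also have "- Y t = integral {0..t} (\<lambda>u. - gg u)" using Y_ode[of t] t assms by simp
    also have "\<dots> \<le> integral {0..t} (\<lambda>x. K * C * x powr (-p))"
    proof (rule integral_le_neg[where N="{0}", OF _ I2i])
      show "(\<lambda>u. - gg u) integrable_on {0..t}" using gg_int[of 0 t] t assms by (auto intro: integrable_neg)
      fix u assume u: "u \<in> {0..t}" "u \<notin> {0}"
      then have u0: "0 < u" "u \<le> a0" using t by auto
      have fu: "f1 u > 0" using f1_pos u0 assms by auto
      have "- gg u = K * f1 u - \<beta>\<^sup>2 * u / Gm u * f1 u" by (simp add: gg_def algebra_simps)
      also have "\<dots> \<le> K * f1 u" using fu u0 Gm_pos[of u] by simp
      also have "\<dots> \<le> K * (C * u powr (-p))" using that u0 Kge unfolding Bd_def by (intro mult_left_mono) auto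
      finally show "- gg u \<le> K * C * u powr (-p)" by simp
    qed simp
    also have "\<dots> = K * C * (t powr (-p + 1) / (-p + 1))" by (rule I2)
    finally have A: "\<beta> * t * f1 t \<le> K * C * (t powr (-p + 1) / (-p + 1))" .
    have "t powr (-p + 1) = t * t powr (-p)" using powr_add[of t "-p" 1] t by (simp add: mult.commute)
    then have "\<beta> * t * f1 t \<le> t * (K * C * t powr (-p) / (1 - p))" using A by (simp add: field_simps)
    then have "t * (\<beta> * f1 t) \<le> t * (K * C * t powr (-p) / (1 - p))" by (simp add: ac_simps)
    then have "\<beta> * f1 t \<le> K * C * t powr (-p) / (1 - p)" using t mult_le_cancel_left_pos by blast
    then have "f1 t * \<beta> \<le> K * C * t powr (-p) / (1 - p)" by (simp add: mult.commute)
    then have "f1 t \<le> (K * C * t powr (-p) / (1 - p)) / \<beta>" using pos_le_divide_eq[OF beta_pos] by blast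
    also have "\<dots> = r * C * t powr (-p)" unfolding r_def q_def by (simp add: field_simps)
    finally show "f1 t \<le> r * C * t powr (-p)" .
  qed
  have all: "Bd (r ^ n * C0)" for n
  proof (induction n)
    case 0 then show ?case using init by simp
  next
    case (Suc n) then show ?case using step[of "r ^ n * C0"] by (simp add: mult.assoc)
  qed
  have "(\<lambda>n. r ^ n * (C0 * a0 powr (-p))) \<longlonglongrightarrow> 0 * (C0 * a0 powr (-p))"
    by (intro tendsto_mult LIMSEQ_power_zero tendsto_const) (use r in auto)
  moreover have "\<forall>n. f1 a0 \<le> r ^ n * (C0 * a0 powr (-p))"
    using all assms unfolding Bd_def by (simp add: mult.assoc)
  ultimately have "f1 a0 \<le> 0 * (C0 * a0 powr (-p))" by (intro LIMSEQ_le_const) auto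
  then show False using fa0 by simp
qed

lemma cont_eps: "isCont f x \<Longrightarrow> e > 0 \<Longrightarrow> \<exists>d>0. \<forall>u. \<bar>u - x\<bar> < d \<longrightarrow> \<bar>f u - f x\<bar> < (e::real)"
  for f :: "real \<Rightarrow> real"
  unfolding continuous_at_eps_delta dist_real_def by blast

lemma Y_isCont: "s \<in> {0<..<as} \<Longrightarrow> isCont Y s"
  by (rule continuous_on_interior[OF Y_cont]) auto

lemma W_diff:
  assumes "0 < t" "t \<le> s" "s < as" 
  shows "(Y s - \<sigma> * s * f1 s) - (Y t - \<sigma> * t * f1 t) =
    integral {t..s} (\<lambda>u. gg u - \<sigma> * s * f1' u - \<sigma> * f1 t)"
proof -
  have gi: "gg integrable_on {t..s}" using gg_int[of t s] assms by auto
  have fi: "f1' integrable_on {t..s}" using f1'_int[of t s] assms by auto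
  have ci: "(\<lambda>x. \<sigma> * s * f1' x) integrable_on {t..s}" using integrable_on_cmult_left[OF fi, of "\<sigma> * s"] by simp
  have "integral {t..s} (\<lambda>u. gg u - \<sigma> * s * f1' u - \<sigma> * f1 t)
      = integral {t..s} (\<lambda>u. gg u - \<sigma> * s * f1' u) - integral {t..s} (\<lambda>u. \<sigma> * f1 t)"
    by (rule integral_diff[OF integrable_diff[OF gi ci]]) (simp add: integrable_on_const)
  also have "integral {t..s} (\<lambda>u. gg u - \<sigma> * s * f1' u) = integral {t..s} gg - \<sigma> * s * integral {t..s} f1'"
    by (subst integral_diff[OF gi ci]) simp
  also have "integral {t..s} (\<lambda>u. \<sigma> * f1 t) = (s - t) * (\<sigma> * f1 t)" using assms by simp
  also have "integral {t..s} gg = Y s - Y t" using Y_diff[of t s] assms by simp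
  also have "integral {t..s} f1' = f1 s - f1 t" using f1_int[of t s] assms by simp
  finally show ?thesis by (simp add: algebra_simps)
qed

lemma integrand_int:
  assumes "0 < t" "t \<le> s" "s < as"
  shows "(\<lambda>u. gg u - \<sigma> * s * f1' u - c) integrable_on {t..s}"
    "(\<lambda>u. gg u + \<sigma> * s * f1' u + c) integrable_on {t..s}"
proof -
  have gi: "gg integrable_on {t..s}" using gg_int[of t s] assms by auto
  have fi: "f1' integrable_on {t..s}" using f1'_int[of t s] assms by auto
  have ci: "(\<lambda>x. \<sigma> * s * f1' x) integrable_on {t..s}" using integrable_on_cmult_left[OF fi, of "\<sigma> * s"] by simp
  show "(\<lambda>u. gg u - \<sigma> * s * f1' u - c) integrable_on {t..s}"
    by (rule integrable_diff[OF integrable_diff[OF gi ci]]) (simp add: integrable_on_const)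
  show "(\<lambda>u. gg u + \<sigma> * s * f1' u + c) integrable_on {t..s}"
    by (rule integrable_add[OF integrable_add[OF gi ci]]) (simp add: integrable_on_const)
qed

lemma upper_barrier:
  assumes "0 < t1" "t1 \<le> a0" "a0 < as" "Y a0 \<ge> \<beta> * a0 * f1 a0"
  shows "Y t1 \<ge> \<beta> * t1 * f1 t1"
proof (rule ccontr)
  assume neg: "\<not> ?thesis"
  define W where "W t = Y t - \<beta> * t * f1 t" for t
  have W1: "W t1 < 0" using neg by (simp add: W_def)
  have Kge: "K \<ge> 0" by (rule K_nonneg)
  have Wc: "continuous_on {t1..a0} W" unfolding W_def
  proof (intro continuous_intros)
    show "continuous_on {t1..a0} Y" by (rule continuous_on_subset[OF Y_cont]) (use assms in auto)
    show "continuous_on {t1..a0} f1" by (rule continuous_on_subset[OF X_cont_on[of t1]]) (use assms in auto)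
  qed
  define S where "S = {t1..a0} \<inter> W -` {0..}"
  have Sc: "closed S" unfolding S_def by (rule continuous_closed_preimage[OF Wc]) auto
  have a0S: "a0 \<in> S" using assms by (simp add: S_def W_def)
  have Sb: "bdd_below S" unfolding S_def by (rule bdd_belowI[of _ t1]) auto
  define s where "s = Inf S"
  have sS: "s \<in> S" unfolding s_def using closed_contains_Inf[OF _ Sb Sc] a0S by auto
  then have s1: "t1 \<le> s" "s \<le> a0" "W s \<ge> 0" by (auto simp: S_def)
  have below: "W t < 0" if "t1 \<le> t" "t < s" for t
  proof (rule ccontr)
    assume "\<not> W t < 0"
    then have "t \<in> S" using that s1 by (auto simp: S_def)
    then have "s \<le> t" unfolding s_def by (rule cInf_lower[OF _ Sb])
    then show False using that by simp
  qed
  have ts: "t1 < s" using W1 s1 by (cases "t1 = s") auto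
  have s0: "s \<in> {0<..<as}" using ts assms s1 by auto
  define fs where "fs = f1 s"
  have fs0: "fs > 0" using f1_pos s0 by (auto simp: fs_def)
  define Z where "Z u = \<beta> * u\<^sup>2 * f1 u - s * Y u" for u
  have Zc: "isCont Z s" unfolding Z_def
    by (intro continuous_intros X_isCont Y_isCont s0)
  define e1 where "e1 = pi * t1 * fs"
  have e1: "e1 > 0" using assms fs0 pi_gt_zero by (simp add: e1_def)
  obtain d1 where d1: "d1 > 0" "\<And>u. \<bar>u - s\<bar> < d1 \<Longrightarrow> \<bar>Z u - Z s\<bar> < e1"
    using cont_eps[OF Zc e1] by blast
  have fs2: "fs / 2 > 0" using fs0 by simp
  obtain d2 where d2: "d2 > 0" "\<And>u. \<bar>u - s\<bar> < d2 \<Longrightarrow> \<bar>f1 u - f1 s\<bar> < fs / 2"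
    using cont_eps[OF X_isCont[OF s0] fs2] unfolding fs_def by blast
  define t where "t = max t1 (s - min d1 d2 / 2)"
  have t: "t1 \<le> t" "t < s" "s - t < d1" "s - t < d2" using ts d1 d2 by (auto simp: t_def)
  have Wt: "W t < 0" using below t by auto
  have "\<bar>f1 t - fs\<bar> < fs / 2" using d2(2)[of t] t unfolding fs_def by auto
  then have ft: "f1 t > fs / 2" by linarith
  have Zs: "Z s \<le> 0"
  proof -
    have "Z s = - s * W s" by (simp add: Z_def W_def power2_eq_square algebra_simps)
    then show ?thesis using s1 ts assms by (simp add: mult_nonneg_nonneg)
  qed
  have "W s - W t = integral {t..s} (\<lambda>u. gg u - \<beta> * s * f1' u - \<beta> * f1 t)"
    unfolding W_def by (rule W_diff) (use t assms s1 in auto)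
  also have "\<dots> \<le> integral {t..s} (\<lambda>u. - (\<beta> * fs / 4))"
  proof (rule integral_le_neg[OF _ _ Nset(1)])
    show "(\<lambda>u. gg u - \<beta> * s * f1' u - \<beta> * f1 t) integrable_on {t..s}"
      by (rule integrand_int) (use t assms s1 in auto)
    fix u assume u: "u \<in> {t..s}" "u \<notin> Nset"
    then have u0: "0 < u" "u < as" "t1 \<le> u" using t assms s1 by auto
    have Zu: "Z u < e1" using d1(2)[of u] u t Zs by auto
    have fu: "f1 u > 0" using f1_pos u0 by auto
    have ug: "u * Gm u > 0" using u0 Gm_pos[of u] by simp
    have e: "f1' u = Y u / (u * Gm u)" using f1'_eq[of u] u u0 by auto
    have split: "gg u - \<beta> * s * f1' u - \<beta> * f1 t = \<beta> / (u * Gm u) * Z u - K * f1 u - \<beta> * f1 t"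
    proof -
      have gm: "Gm u \<noteq> 0" "u \<noteq> 0" using Gm_pos[of u] u0 by auto
      show ?thesis using gm unfolding gg_def e Z_def by (simp add: field_simps power2_eq_square)
    qed
    have "\<beta> / (u * Gm u) * Z u \<le> \<beta> / (u * Gm u) * e1"
      using Zu ug beta_pos by (intro mult_left_mono) auto
    also have "\<dots> \<le> \<beta> / (t1 * (4 * pi)) * e1"
    proof (intro mult_right_mono divide_left_mono)
      show "t1 * (4 * pi) \<le> u * Gm u" using u0 Gm_ge[of u] assms by (intro mult_mono) auto
      show "0 < u * Gm u * (t1 * (4 * pi))" by (rule mult_pos_pos[OF ug]) (use assms pi_gt_zero in simp)
    qed (use beta_pos e1 in auto)
    also have "\<dots> = \<beta> * fs / 4" using assms pi_gt_zero by (simp add: e1_def field_simps)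
    finally have A: "\<beta> / (u * Gm u) * Z u \<le> \<beta> * fs / 4" .
    have B: "K * f1 u \<ge> 0" using Kge fu by simp
    have C: "\<beta> * f1 t \<ge> \<beta> * (fs / 2)" using ft beta_pos by (intro mult_left_mono) auto
    show "gg u - \<beta> * s * f1' u - \<beta> * f1 t \<le> - (\<beta> * fs / 4)"
      unfolding split using A B C by linarith
  qed (use t in auto)
  also have "\<dots> = (s - t) * (- (\<beta> * fs / 4))" using t by simp
  also have "\<dots> < 0" using t beta_pos fs0 by (simp add: mult_pos_pos)
  finally show False using Wt s1 by linarith
qed

lemma lower_barrier:
  assumes "0 < t1" "t1 \<le> a0" "a0 < as" "Y a0 \<le> - (\<beta> * a0 * f1 a0)"
  shows "Y t1 \<le> - (\<beta> * t1 * f1 t1)"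
proof (rule ccontr)
  assume neg: "\<not> ?thesis"
  define V where "V t = Y t - (- \<beta>) * t * f1 t" for t
  have V1: "V t1 > 0" using neg by (simp add: V_def)
  have Kge: "K \<ge> 0" by (rule K_nonneg)
  have Vc: "continuous_on {t1..a0} V" unfolding V_def
  proof (intro continuous_intros)
    show "continuous_on {t1..a0} Y" by (rule continuous_on_subset[OF Y_cont]) (use assms in auto)
    show "continuous_on {t1..a0} f1" by (rule continuous_on_subset[OF X_cont_on[of t1]]) (use assms in auto)
  qed
  define S where "S = {t1..a0} \<inter> V -` {..0}"
  have Sc: "closed S" unfolding S_def by (rule continuous_closed_preimage[OF Vc]) auto
  have a0S: "a0 \<in> S" using assms by (simp add: S_def V_def)
  have Sb: "bdd_below S" unfolding S_def by (rule bdd_belowI[of _ t1]) auto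
  define s where "s = Inf S"
  have sS: "s \<in> S" unfolding s_def using closed_contains_Inf[OF _ Sb Sc] a0S by auto
  then have s1: "t1 \<le> s" "s \<le> a0" "V s \<le> 0" by (auto simp: S_def)
  have below: "V t > 0" if "t1 \<le> t" "t < s" for t
  proof (rule ccontr)
    assume "\<not> V t > 0"
    then have "t \<in> S" using that s1 by (auto simp: S_def)
    then have "s \<le> t" unfolding s_def by (rule cInf_lower[OF _ Sb])
    then show False using that by simp
  qed
  have ts: "t1 < s" using V1 s1 by (cases "t1 = s") auto
  have s0: "s \<in> {0<..<as}" using ts assms s1 by auto
  have Vcs: "isCont V s" unfolding V_def
    by (intro continuous_intros X_isCont Y_isCont s0)
  have Vs: "V s = 0"
  proof (rule ccontr)
    assume "V s \<noteq> 0"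
    then have vn: "- V s > 0" using s1 by simp
    obtain d where d: "d > 0" "\<And>u. \<bar>u - s\<bar> < d \<Longrightarrow> \<bar>V u - V s\<bar> < - V s"
      using cont_eps[OF Vcs vn] by blast
    define u where "u = max t1 (s - d / 2)"
    have u: "t1 \<le> u" "u < s" "s - u < d" using ts d by (auto simp: u_def)
    have "V u > 0" using below u by auto
    moreover have "\<bar>V u - V s\<bar> < - V s" using d(2)[of u] u by auto
    ultimately show False by linarith
  qed
  define fs where "fs = f1 s"
  have fs0: "fs > 0" using f1_pos s0 by (auto simp: fs_def)
  define m where "m = (\<beta> - K) * fs"
  have m0: "m > 0" using small fs0 by (simp add: m_def)
  have bk: "\<beta> + K > 0" using beta_pos Kge by simp
  define \<eta> where "\<eta> = m / (4 * (\<beta> + K))"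
  have eta0: "\<eta> > 0" using m0 bk by (simp add: \<eta>_def)
  have eta_eq: "(\<beta> + K) * \<eta> = m / 4"
  proof -
    have "(\<beta> + K) * \<eta> = ((\<beta> + K) / (\<beta> + K)) * (m / 4)" by (simp add: \<eta>_def field_simps)
    then show ?thesis using bk by simp
  qed
  define Z where "Z u = \<beta> * u\<^sup>2 * f1 u + s * Y u" for u
  have Zc: "isCont Z s" unfolding Z_def
    by (intro continuous_intros X_isCont Y_isCont s0)
  have Zs: "Z s = 0"
  proof -
    have "Z s = s * V s" by (simp add: Z_def V_def power2_eq_square algebra_simps)
    then show ?thesis using Vs by simp
  qed
  define e1 where "e1 = pi * t1 * m / \<beta>"
  have e1: "e1 > 0" using assms m0 beta_pos pi_gt_zero by (simp add: e1_def)
  obtain d1 where d1: "d1 > 0" "\<And>u. \<bar>u - s\<bar> < d1 \<Longrightarrow> \<bar>Z u - Z s\<bar> < e1"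
    using cont_eps[OF Zc e1] by blast
  obtain d2 where d2: "d2 > 0" "\<And>u. \<bar>u - s\<bar> < d2 \<Longrightarrow> \<bar>f1 u - f1 s\<bar> < \<eta>"
    using cont_eps[OF X_isCont[OF s0] eta0] by blast
  define t where "t = max t1 (s - min d1 d2 / 2)"
  have t: "t1 \<le> t" "t < s" "s - t < d1" "s - t < d2" using ts d1 d2 by (auto simp: t_def)
  have Vt: "V t > 0" using below t by auto
  have "\<bar>f1 t - fs\<bar> < \<eta>" using d2(2)[of t] t unfolding fs_def by auto
  then have ft: "f1 t > fs - \<eta>" by linarith
  have "integral {t..s} (\<lambda>u. m / 2) \<le> integral {t..s} (\<lambda>u. gg u - (- \<beta>) * s * f1' u - (- \<beta>) * f1 t)"
  proof (rule integral_le_neg[OF _ _ Nset(1)])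
    show "(\<lambda>u. gg u - (- \<beta>) * s * f1' u - (- \<beta>) * f1 t) integrable_on {t..s}"
      by (rule integrand_int) (use t assms s1 in auto)
    fix u assume u: "u \<in> {t..s}" "u \<notin> Nset"
    then have u0: "0 < u" "u < as" "t1 \<le> u" "\<bar>u - s\<bar> < d1" "\<bar>u - s\<bar> < d2" using t assms s1 by auto
    have Zu: "Z u > - e1" using d1(2)[of u] u0 Zs by auto
    have "\<bar>f1 u - fs\<bar> < \<eta>" using d2(2)[of u] u0 unfolding fs_def by auto
    then have fu: "f1 u < fs + \<eta>" by linarith
    have ug: "u * Gm u > 0" using u0 Gm_pos[of u] by simp
    have e: "f1' u = Y u / (u * Gm u)" using f1'_eq[of u] u u0 by auto
    have split: "gg u - (- \<beta>) * s * f1' u - (- \<beta>) * f1 t = \<beta> / (u * Gm u) * Z u - K * f1 u + \<beta> * f1 t"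
    proof -
      have gm: "Gm u \<noteq> 0" "u \<noteq> 0" using Gm_pos[of u] u0 by auto
      show ?thesis using gm unfolding gg_def e Z_def by (simp add: field_simps power2_eq_square)
    qed
    have "- (m / 4) = \<beta> / (t1 * (4 * pi)) * (- e1)" using assms pi_gt_zero beta_pos by (simp add: e1_def field_simps)
    also have "\<dots> \<le> \<beta> / (u * Gm u) * (- e1)"
    proof -
      have "\<beta> / (u * Gm u) \<le> \<beta> / (t1 * (4 * pi))"
      proof (rule divide_left_mono)
        show "t1 * (4 * pi) \<le> u * Gm u" using u0 Gm_ge[of u] assms by (intro mult_mono) auto
        show "0 < u * Gm u * (t1 * (4 * pi))" by (rule mult_pos_pos[OF ug]) (use assms pi_gt_zero in simp)
      qed (use beta_pos in simp)
      then show ?thesis using e1 by (intro mult_right_mono_neg) auto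
    qed
    also have "\<dots> \<le> \<beta> / (u * Gm u) * Z u"
      using Zu ug beta_pos by (intro mult_left_mono) auto
    finally have A: "\<beta> / (u * Gm u) * Z u \<ge> - (m / 4)" .
    have B: "K * f1 u \<le> K * (fs + \<eta>)" using Kge fu by (intro mult_left_mono) auto
    have C: "\<beta> * f1 t \<ge> \<beta> * (fs - \<eta>)" using ft beta_pos by (intro mult_left_mono) auto
    have D: "\<beta> * (fs - \<eta>) - K * (fs + \<eta>) = m - m / 4"
      using eta_eq by (simp add: m_def algebra_simps)
    show "m / 2 \<le> gg u - (- \<beta>) * s * f1' u - (- \<beta>) * f1 t"
      unfolding split using A B C D by linarith
  qed (use t in auto)
  also have "\<dots> = V s - V t"
    unfolding V_def by (rule W_diff[symmetric]) (use t assms s1 in auto)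
  finally have "(s - t) * (m / 2) \<le> V s - V t" using t by simp
  moreover have "(s - t) * (m / 2) > 0" using t m0 by simp
  ultimately show False using Vt Vs by linarith
qed

lemma final: assumes a: "a \<in> {0<..<as}" shows "\<bar>Y a\<bar>\<^sup>2 - \<beta>\<^sup>2 * a\<^sup>2 * \<bar>f1 a\<bar>\<^sup>2 < 0"
proof -
  have a0: "0 < a" "a < as" using a by auto
  have up: "Y a < \<beta> * a * f1 a"
  proof (rule ccontr)
    assume "\<not> ?thesis"
    then have "Y a \<ge> \<beta> * a * f1 a" by simp
    then have "\<And>t. 0 < t \<Longrightarrow> t \<le> a \<Longrightarrow> Y t \<ge> \<beta> * t * f1 t"
      using upper_barrier a0 by blast
    then show False using U2 a0 by blast
  qed
  have low: "Y a > - (\<beta> * a * f1 a)"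
  proof (rule ccontr)
    assume "\<not> ?thesis"
    then have "Y a \<le> - (\<beta> * a * f1 a)" by simp
    then have "\<And>t. 0 < t \<Longrightarrow> t \<le> a \<Longrightarrow> Y t \<le> - (\<beta> * t * f1 t)"
      using lower_barrier a0 by blast
    then show False using L2 a0 by blast
  qed
  have pos: "\<beta> * a * f1 a > 0" using beta_pos a0 f1_pos a by auto
  have "\<bar>Y a\<bar> < \<beta> * a * f1 a" using up low by linarith
  then have "\<bar>Y a\<bar>\<^sup>2 < (\<beta> * a * f1 a)\<^sup>2" by (intro power_strict_mono) auto
  also have "(\<beta> * a * f1 a)\<^sup>2 = \<beta>\<^sup>2 * a\<^sup>2 * \<bar>f1 a\<bar>\<^sup>2" by (simp add: power_mult_distrib)
  finally show ?thesis by simp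
qed

end

theorem mainTheorem14:
  fixes G :: "real \<Rightarrow> real" and \<beta> as :: real and f1 f1' Y :: "real \<Rightarrow> real"
  assumes as_pos: "as > 0"
    and G_meas: "set_borel_measurable lebesgue {0..as} G"
    and G_bdd: "bounded (G ` {0..as})"
    and G_ge: "AE a in lebesgue. a \<in> {0..as} \<longrightarrow> G a \<ge> 4 * pi"
    and beta_pos: "\<beta> > 0"
    and eigen: "weak_eigen G \<beta> as (kappa1 G \<beta> as)
                  (\<lambda>a. complex_of_real (f1 a)) (\<lambda>a. complex_of_real (f1' a))"
    and f1_pos: "\<forall>a\<in>{0<..<as}. f1 a > 0"
    and f1_locAC: "\<forall>x\<in>{0<..as}. \<forall>y\<in>{0<..as}. x \<le> y \<longrightarrow>
                     set_integrable lebesgue {x..y} f1' \<and>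
                     f1 y - f1 x = (LINT t:{x..y}|lebesgue. f1' t)"
    and Y_ac: "abs_cont_on {0..as} Y"
    and Y_rep: "AE a in lebesgue. a \<in> {0<..<as} \<longrightarrow> Y a = Pfun G a * f1' a"
    and small: "kappa1 G \<beta> as < \<beta>"
  shows "\<forall>a\<in>{0<..<as}. \<bar>Y a\<bar>\<^sup>2 - \<beta>\<^sup>2 * a\<^sup>2 * \<bar>f1 a\<bar>\<^sup>2 < 0"
proof -
  interpret S14 G \<beta> as "kappa1 G \<beta> as" f1 f1' Y
    using assms by unfold_locales
  show ?thesis using final by blast
qed

end
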